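(* Let $\mathcal V_0 = [(\underline v_{t|0})_{t=0}^{T-1}, (\bar v_{t|0})_{t=0}^{T-1}]$ be an interval and let $\mathcal V_1 := [(\underline v_{1|0}, \ldots, \underline v_{T-1|0}, 0), (\bar v_{1|0}, \ldots, \bar v_{T-1|0}, 1)]$ (with $0, 1 \in \mathbb R^{m_u}$ the all-zero and all-one vectors). Let $x_0, x_1 \in \mathbb R^{n_x}$ be arbitrary. Suppose $\{\lambda_{t|0}, \rho_{t|0}\}_{t=0}^{T}$ and $\{\mu_{t|0}, \underline\nu_{t|0}, \bar\nu_{t|0}, \sigma_{t|0}\}_{t=0}^{T-1}$ are feasible multipliers for $\mathbf D(\mathcal V_0; x_0)$. Define - $(\lambda_{t|1}, \rho_{t|1}) := (\lambda_{t+1|0}, \rho_{t+1|0})$ for $t = 0, \ldots, T-1$, - $(\lambda_{T|1}, \rho_{T|1}) := 0$, - $(\mu_{t|1}, \underline\nu_{t|1}, \bar\nu_{t|1}, \sigma_{t|1}) := (\mu_{t+1|0}, \underline\nu_{t+1|0}, \bar\nu_{t+1|0}, \sigma_{t+1|0})$ for $t = 0, \ldots, T-2$, - $(\mu_{T-1|1}, \underline\nu_{T-1|1}, \bar\nu_{T-1|1}, \sigma_{T-1|1}) := 0$. Then $\{\lambda_{t|1}, \rho_{t|1}\}_{t=0}^{T}$, $\{\mu_{t|1}, \underline\nu_{t|1}, \bar\nu_{t|1}, \sigma_{t|1}\}_{t=0}^{T-1}$ are feasible multipliers for $\mathbf D(\mathcal V_1; x_1)$.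
   Context: Fix integers $n_x, n_u, m_u \ge 0$ and $T \ge 1$. Let $A \in \mathbb R^{n_x \times n_x}$, $B \in \mathbb R^{n_x \times (n_u+m_u)}$, and let $F, G, h$ be a matrix pair and vector defining the polyhedron $\mathcal D = \{(x,u) \in \mathbb R^{n_x} \times \mathbb R^{n_u+m_u} : F x + G u \le h\}$, assumed to contain the origin. Let $V \in \mathbb R^{m_u \times (n_u+m_u)}$ be the selection matrix extracting the $m_u$ binary entries of an input vector $u$. Let $Q$ (with $n_x$ columns) and $R$ (with $n_u + m_u$ columns) be weight matrices, possibly rank deficient. An interval is a set $\mathcal V = [(\underline v_t)_{t=0}^{T-1}, (\bar v_t)_{t=0}^{T-1}] \subset \mathbb R^{T m_u}$ with $\underline v_t, \bar v_t \in \{0,1\}^{m_u}$, $\underline v_t \le \bar v_t$. For an interval $\mathcal V$ and an initial state $\xi \in \mathbb R^{n_x}$, the QP $\mathbf P(\mathcal V; \xi)$ is: minimize $\sum_{t=0}^T |Q x_t|^2 + \sum_{t=0}^{T-1} |R u_t|^2$ over $x_0,\ldots,x_T \in \mathbb R^{n_x}$, $u_0, \ldots, u_{T-1} \in \mathbb R^{n_u+m_u}$ subject to $x_0 = \xi$, $x_{t+1} = A x_t + B u_t$, $(x_t, u_t) \in \mathcal D$, $\underline v_t \le V u_t \le \bar v_t$ for $t = 0, \ldots, T-1$. Its Lagrangian dual $\mathbf D(\mathcal V; \xi)$ is: maximize $$-\sum_{t=0}^{T} |\rho_t/2|^2 - \sum_{t=0}^{T-1}\big(|\sigma_t/2|^2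 + h'\mu_t + \bar v_t'\bar\nu_t - \underline v_t'\underline\nu_t\big) - \xi'\lambda_0$$ over multipliers $\{\lambda_t, \rho_t\}_{t=0}^T$, $\{\mu_t, \underline\nu_t, \bar\nu_t, \sigma_t\}_{t=0}^{T-1}$ of appropriate dimensions subject to: $Q'\rho_t + \lambda_t - A'\lambda_{t+1} + F'\mu_t = 0$ for $t=0,\ldots,T-1$; $Q'\rho_T + \lambda_T = 0$; $R'\sigma_t - B'\lambda_{t+1} + G'\mu_t + V'(\bar\nu_t - \underline\nu_t) = 0$ for $t = 0, \ldots, T-1$; $(\mu_t, \underline\nu_t, \bar\nu_t) \ge 0$ for $t=0,\ldots,T-1$. "Feasible multipliers" means a point satisfying these constraints. $|\cdot|$ is the Euclidean norm and $'$ denotes transpose. *)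

theory Defs
  imports "Jordan_Normal_Form.Matrix"
begin

definition nonneg_vec :: "real vec \<Rightarrow> bool" where
  "nonneg_vec v \<longleftrightarrow> (\<forall>i<dim_vec v. 0 \<le> v $ i)"

(* Standing data of the MIQP: dimensions nx, nu, mu (n_u, m_u), nc (rows of F,G,h),
   nq (rows of Q), nr (rows of R). *)
definition problem_data ::
  "nat \<Rightarrow> nat \<Rightarrow> nat \<Rightarrow> nat \<Rightarrow> nat \<Rightarrow> nat \<Rightarrow>
   real mat \<Rightarrow> real mat \<Rightarrow> real mat \<Rightarrow> real mat \<Rightarrow> real vec \<Rightarrow> real mat \<Rightarrow> real mat \<Rightarrow> real mat \<Rightarrow> bool"
where
  "problem_data nx nu mu nc nq nr A B F G h V Q R \<longleftrightarrow>
     A \<in> carrier_mat nx nx \<and> B \<in> carrier_mat nx (nu + mu) \<and>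
     F \<in> carrier_mat nc nx \<and> G \<in> carrier_mat nc (nu + mu) \<and> h \<in> carrier_vec nc \<and>
     V \<in> carrier_mat mu (nu + mu) \<and> Q \<in> carrier_mat nq nx \<and> R \<in> carrier_mat nr (nu + mu) \<and>
     \<comment> \<open>the polyhedron D contains the origin: F 0 + G 0 <= h\<close>
     nonneg_vec h \<and>
     \<comment> \<open>V is a selection matrix extracting mu distinct entries of u\<close>
     (\<exists>idx. inj_on idx {0..<mu} \<and> (\<forall>i<mu. idx i < nu + mu) \<and>
        V = mat mu (nu + mu) (\<lambda>(i, j). if j = idx i then 1 else 0))"

definition is_interval :: "nat \<Rightarrow> nat \<Rightarrow> (nat \<Rightarrow> real vec) \<Rightarrow> (nat \<Rightarrow> real vec) \<Rightarrow> bool" where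
  "is_interval mu T vl vu \<longleftrightarrow>
     (\<forall>t<T. vl t \<in> carrier_vec mu \<and> vu t \<in> carrier_vec mu \<and>
        (\<forall>i<mu. vl t $ i \<in> {0, 1} \<and> vu t $ i \<in> {0, 1} \<and> vl t $ i \<le> vu t $ i))"

(* The constraints of D(V; xi) do not involve V or xi (these only enter the objective),
   but they are kept as arguments to mirror the paper's notion. *)
definition dual_feasible ::
  "nat \<Rightarrow> nat \<Rightarrow> nat \<Rightarrow> nat \<Rightarrow> nat \<Rightarrow> nat \<Rightarrow>
   real mat \<Rightarrow> real mat \<Rightarrow> real mat \<Rightarrow> real mat \<Rightarrow> real vec \<Rightarrow> real mat \<Rightarrow> real mat \<Rightarrow> real mat \<Rightarrow>
   nat \<Rightarrow> (nat \<Rightarrow> real vec) \<Rightarrow> (nat \<Rightarrow> real vec) \<Rightarrow> real vec \<Rightarrow>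
   (nat \<Rightarrow> real vec) \<Rightarrow> (nat \<Rightarrow> real vec) \<Rightarrow>
   (nat \<Rightarrow> real vec) \<Rightarrow> (nat \<Rightarrow> real vec) \<Rightarrow> (nat \<Rightarrow> real vec) \<Rightarrow> (nat \<Rightarrow> real vec) \<Rightarrow> bool"
where
  "dual_feasible nx nu mu nc nq nr A B F G h V Q R T vl vu xi lam rho mul nul nuu sig \<longleftrightarrow>
     (\<forall>t\<le>T. lam t \<in> carrier_vec nx \<and> rho t \<in> carrier_vec nq) \<and>
     (\<forall>t<T. mul t \<in> carrier_vec nc \<and> nul t \<in> carrier_vec mu \<and> nuu t \<in> carrier_vec mu \<and>
            sig t \<in> carrier_vec nr) \<and>
     (\<forall>t<T. transpose_mat Q *\<^sub>v rho t + lam t - transpose_mat A *\<^sub>v lam (Suc t)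
              + transpose_mat F *\<^sub>v mul t = 0\<^sub>v nx) \<and>
     transpose_mat Q *\<^sub>v rho T + lam T = 0\<^sub>v nx \<and>
     (\<forall>t<T. transpose_mat R *\<^sub>v sig t - transpose_mat B *\<^sub>v lam (Suc t)
              + transpose_mat G *\<^sub>v mul t + transpose_mat V *\<^sub>v (nuu t - nul t) = 0\<^sub>v (nu + mu)) \<and>
     (\<forall>t<T. nonneg_vec (mul t) \<and> nonneg_vec (nul t) \<and> nonneg_vec (nuu t))"

end

theory Submission
  imports Defs
begin

lemma mat_vec_zero[simp]: "(M :: real mat) \<in> carrier_mat n m \<Longrightarrow> M *\<^sub>v 0\<^sub>v m = 0\<^sub>v n"
  by (intro eq_vecI) (auto simp: mult_mat_vec_def scalar_prod_def)

lemma mat_vec_zero_T[simp]: "(M :: real mat) \<in> carrier_mat m n \<Longrightarrow> transpose_mat M *\<^sub>v 0\<^sub>v m = 0\<^sub>v n"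
  by (rule mat_vec_zero) simp

theorem lemma1:
  fixes nx nu mu nc nq nr T :: nat
    and A B F G V Q R :: "real mat" and h :: "real vec"
    and vl0 vu0 :: "nat \<Rightarrow> real vec" and x0 x1 :: "real vec"
    and lam0 rho0 mul0 nul0 nuu0 sig0 :: "nat \<Rightarrow> real vec"
  assumes "T \<ge> 1"
    and "problem_data nx nu mu nc nq nr A B F G h V Q R"
    and "is_interval mu T vl0 vu0"
    and "x0 \<in> carrier_vec nx" and "x1 \<in> carrier_vec nx"
    and "dual_feasible nx nu mu nc nq nr A B F G h V Q R T vl0 vu0 x0
           lam0 rho0 mul0 nul0 nuu0 sig0"
  shows "dual_feasible nx nu mu nc nq nr A B F G h V Q R T
           (\<lambda>t. if t < T - 1 then vl0 (Suc t) else 0\<^sub>v mu)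
           (\<lambda>t. if t < T - 1 then vu0 (Suc t) else vec mu (\<lambda>_. 1))
           x1
           (\<lambda>t. if t < T then lam0 (Suc t) else 0\<^sub>v nx)
           (\<lambda>t. if t < T then rho0 (Suc t) else 0\<^sub>v nq)
           (\<lambda>t. if t < T - 1 then mul0 (Suc t) else 0\<^sub>v nc)
           (\<lambda>t. if t < T - 1 then nul0 (Suc t) else 0\<^sub>v mu)
           (\<lambda>t. if t < T - 1 then nuu0 (Suc t) else 0\<^sub>v mu)
           (\<lambda>t. if t < T - 1 then sig0 (Suc t) else 0\<^sub>v nr)"
proof -
  from assms(2) have dims: "A \<in> carrier_mat nx nx" "B \<in> carrier_mat nx (nu + mu)"
     "F \<in> carrier_mat nc nx" "G \<in> carrier_mat nc (nu + mu)"
     "V \<in> carrier_mat mu (nu + mu)" "Q \<in> carrier_mat nq nx" "R \<in> carrier_mat nr (nu + mu)"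
    unfolding problem_data_def by auto
  note D = assms(6)[unfolded dual_feasible_def]
  have L: "\<And>t. t \<le> T \<Longrightarrow> lam0 t \<in> carrier_vec nx \<and> rho0 t \<in> carrier_vec nq" using D by blast
  have M: "\<And>t. t < T \<Longrightarrow> mul0 t \<in> carrier_vec nc \<and> nul0 t \<in> carrier_vec mu \<and> nuu0 t \<in> carrier_vec mu \<and>
            sig0 t \<in> carrier_vec nr" using D by blast
  have E1: "\<And>t. t<T \<Longrightarrow> transpose_mat Q *\<^sub>v rho0 t + lam0 t - transpose_mat A *\<^sub>v lam0 (Suc t)
              + transpose_mat F *\<^sub>v mul0 t = 0\<^sub>v nx" using D by blast
  have E2: "transpose_mat Q *\<^sub>v rho0 T + lam0 T = 0\<^sub>v nx" using D by blast
  have E3: "\<And>t. t<T \<Longrightarrow> transpose_mat R *\<^sub>v sig0 t - transpose_mat B *\<^sub>v lam0 (Suc t)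
              + transpose_mat G *\<^sub>v mul0 t + transpose_mat V *\<^sub>v (nuu0 t - nul0 t) = 0\<^sub>v (nu + mu)"
    using D by blast
  have NN: "\<And>t. t<T \<Longrightarrow> nonneg_vec (mul0 t) \<and> nonneg_vec (nul0 t) \<and> nonneg_vec (nuu0 t)"
    using D by blast
  have z0: "nonneg_vec (0\<^sub>v n)" for n unfolding nonneg_vec_def by simp
  have last1: "transpose_mat Q *\<^sub>v rho0 T + lam0 T - transpose_mat A *\<^sub>v 0\<^sub>v nx
              + transpose_mat F *\<^sub>v 0\<^sub>v nc = 0\<^sub>v nx"
  proof -
    have "transpose_mat A *\<^sub>v 0\<^sub>v nx = 0\<^sub>v nx" using dims by simp
    moreover have "transpose_mat F *\<^sub>v 0\<^sub>v nc = 0\<^sub>v nx" using dims by simp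
    ultimately show ?thesis using E2 by simp
  qed
  have last2: "transpose_mat Q *\<^sub>v 0\<^sub>v nq + 0\<^sub>v nx = 0\<^sub>v nx" using dims by simp
  have last3: "transpose_mat R *\<^sub>v 0\<^sub>v nr - transpose_mat B *\<^sub>v 0\<^sub>v nx
              + transpose_mat G *\<^sub>v 0\<^sub>v nc + transpose_mat V *\<^sub>v (0\<^sub>v mu - 0\<^sub>v mu) = 0\<^sub>v (nu + mu)"
    using dims by simp
  show ?thesis unfolding dual_feasible_def
  proof (intro conjI allI impI)
    fix t assume "t \<le> T" thus "(if t < T then lam0 (Suc t) else 0\<^sub>v nx) \<in> carrier_vec nx"
      "(if t < T then rho0 (Suc t) else 0\<^sub>v nq) \<in> carrier_vec nq" using L by auto
  next
    fix t assume "t < T"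
    thus "(if t < T - 1 then mul0 (Suc t) else 0\<^sub>v nc) \<in> carrier_vec nc"
      "(if t < T - 1 then nul0 (Suc t) else 0\<^sub>v mu) \<in> carrier_vec mu"
      "(if t < T - 1 then nuu0 (Suc t) else 0\<^sub>v mu) \<in> carrier_vec mu"
      "(if t < T - 1 then sig0 (Suc t) else 0\<^sub>v nr) \<in> carrier_vec nr"
      "nonneg_vec (if t < T - 1 then mul0 (Suc t) else 0\<^sub>v nc)"
      "nonneg_vec (if t < T - 1 then nul0 (Suc t) else 0\<^sub>v mu)"
      "nonneg_vec (if t < T - 1 then nuu0 (Suc t) else 0\<^sub>v mu)"
      using M NN z0 by auto
  next
    fix t assume t: "t < T"
    show "transpose_mat Q *\<^sub>v (if t < T then rho0 (Suc t) else 0\<^sub>v nq) + (if t < T then lam0 (Suc t) else 0\<^sub>v nx) -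
          transpose_mat A *\<^sub>v (if Suc t < T then lam0 (Suc (Suc t)) else 0\<^sub>v nx) +
          transpose_mat F *\<^sub>v (if t < T - 1 then mul0 (Suc t) else 0\<^sub>v nc) = 0\<^sub>v nx"
    proof (cases "t < T - 1")
      case True hence "Suc t < T" by simp
      thus ?thesis using True t E1[of "Suc t"] by simp
    next
      case False hence "Suc t = T" using t by simp
      thus ?thesis using last1 t False by simp
    qed
    show "transpose_mat R *\<^sub>v (if t < T - 1 then sig0 (Suc t) else 0\<^sub>v nr) -
          transpose_mat B *\<^sub>v (if Suc t < T then lam0 (Suc (Suc t)) else 0\<^sub>v nx) +
          transpose_mat G *\<^sub>v (if t < T - 1 then mul0 (Suc t) else 0\<^sub>v nc) +
          transpose_mat V *\<^sub>v ((if t < T - 1 then nuu0 (Suc t) else 0\<^sub>v mu) - (if t < T - 1 then nul0 (Suc t) else 0\<^sub>v mu)) =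
          0\<^sub>v (nu + mu)"
    proof (cases "t < T - 1")
      case True hence "Suc t < T" by simp
      thus ?thesis using True t E3[of "Suc t"] by simp
    next
      case False hence "Suc t = T" using t by simp
      thus ?thesis using last3 t False by simp
    qed
  next
    show "transpose_mat Q *\<^sub>v (if T < T then rho0 (Suc T) else 0\<^sub>v nq) + (if T < T then lam0 (Suc T) else 0\<^sub>v nx) = 0\<^sub>v nx"
      using last2 by simp
  qed
qed

end
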